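(* If $G$ is a connected, claw-free cubic graph of order $n$, then $\sigma_{(3,q)}(G) = \beta(G)$ for every $q \in \mathbb{N}\cup\{\infty\}$ with $q\ge 2$.
   Context: A graph is claw-free if it has no induced subgraph isomorphic to $K_{1,3}$; it is cubic if every vertex has degree $3$. $\beta(G)$ denotes the vertex covering number (minimum size of a set of vertices meeting every edge). $(p,q)$-spreading: let $p\in\mathbb{N}$ and $q\in\mathbb{N}\cup\{\infty\}$. Start with a set $S\subseteq V(G)$ of blue vertices, all other vertices white. The color change rule: if a white vertex $w$ has at least $p$ blue neighbors, and at least one of the blue neighbors of $w$ has at most $q$ white neighbors, then $w$ is recolored blue. $S$ is a $(p,q)$-spreading set if repeatedly applying this rule eventually colors all vertices blue. $\sigma_{(p,q)}(G)$ is the minimum cardinality of a $(p,q)$-spreading set of $G$. *)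

theory Defs
  imports Main "HOL-Library.Extended_Nat"
begin

definition simple_graph :: "'a set \<Rightarrow> ('a \<Rightarrow> 'a \<Rightarrow> bool) \<Rightarrow> bool" where
  "simple_graph V E \<longleftrightarrow> finite V \<and> (\<forall>u v. E u v \<longrightarrow> u \<in> V \<and> v \<in> V)
     \<and> (\<forall>u v. E u v \<longrightarrow> E v u) \<and> (\<forall>v. \<not> E v v)"

definition nbrs :: "('a \<Rightarrow> 'a \<Rightarrow> bool) \<Rightarrow> 'a \<Rightarrow> 'a set" where
  "nbrs E v = {u. E v u}"

definition cubic :: "'a set \<Rightarrow> ('a \<Rightarrow> 'a \<Rightarrow> bool) \<Rightarrow> bool" where
  "cubic V E \<longleftrightarrow> (\<forall>v\<in>V. card (nbrs E v) = 3)"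

definition connected_graph :: "'a set \<Rightarrow> ('a \<Rightarrow> 'a \<Rightarrow> bool) \<Rightarrow> bool" where
  "connected_graph V E \<longleftrightarrow> V \<noteq> {} \<and> (\<forall>u\<in>V. \<forall>v\<in>V. E\<^sup>*\<^sup>* u v)"

definition claw_free :: "'a set \<Rightarrow> ('a \<Rightarrow> 'a \<Rightarrow> bool) \<Rightarrow> bool" where
  "claw_free V E \<longleftrightarrow> \<not> (\<exists>c\<in>V. \<exists>x y z. E c x \<and> E c y \<and> E c z
      \<and> x \<noteq> y \<and> x \<noteq> z \<and> y \<noteq> z \<and> \<not> E x y \<and> \<not> E x z \<and> \<not> E y z)"

definition vertex_cover :: "'a set \<Rightarrow> ('a \<Rightarrow> 'a \<Rightarrow> bool) \<Rightarrow> 'a set \<Rightarrow> bool" where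
  "vertex_cover V E C \<longleftrightarrow> C \<subseteq> V \<and> (\<forall>u v. E u v \<longrightarrow> u \<in> C \<or> v \<in> C)"

definition vertex_cover_number :: "'a set \<Rightarrow> ('a \<Rightarrow> 'a \<Rightarrow> bool) \<Rightarrow> nat" where
  "vertex_cover_number V E = (LEAST k. \<exists>C. vertex_cover V E C \<and> card C = k)"

text \<open>One round of the (p,q) color change rule applied simultaneously to all
  white vertices that are eligible given the current blue set B.  Since the rule is
  monotone in B, the order of application does not matter for the final colouring.
  q is in nat \<union> {\<infinity>}, modelled by enat.\<close>
definition spread_step :: "'a set \<Rightarrow> ('a \<Rightarrow> 'a \<Rightarrow> bool) \<Rightarrow> nat \<Rightarrow> enat \<Rightarrow> 'a set \<Rightarrow> 'a set" where
  "spread_step V E p q B = B \<union> {w \<in> V - B. p \<le> card (nbrs E w \<inter> B)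
      \<and> (\<exists>u \<in> nbrs E w \<inter> B. enat (card (nbrs E u - B)) \<le> q)}"

definition spreading_set :: "'a set \<Rightarrow> ('a \<Rightarrow> 'a \<Rightarrow> bool) \<Rightarrow> nat \<Rightarrow> enat \<Rightarrow> 'a set \<Rightarrow> bool" where
  "spreading_set V E p q S \<longleftrightarrow> S \<subseteq> V \<and> (\<exists>k. (spread_step V E p q ^^ k) S = V)"

definition spreading_number :: "'a set \<Rightarrow> ('a \<Rightarrow> 'a \<Rightarrow> bool) \<Rightarrow> nat \<Rightarrow> enat \<Rightarrow> nat" where
  "spreading_number V E p q = (LEAST k. \<exists>S. spreading_set V E p q S \<and> card S = k)"

end

theory Submission
  imports Defs
begin

lemma spread_cover:
  assumes sg: "simple_graph V E" and cub: "cubic V E"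
    and sp: "spreading_set V E 3 q S"
  shows "vertex_cover V E S"
proof -
  have inv: "\<forall>u v. E u v \<and> u \<notin> S \<and> v \<notin> S \<longrightarrow> u \<notin> (spread_step V E 3 q ^^ k) S" for k
  proof (induction k)
    case 0 then show ?case by simp
  next
    case (Suc k)
    show ?case
    proof (intro allI impI)
      fix u v assume uv: "E u v \<and> u \<notin> S \<and> v \<notin> S"
      let ?B = "(spread_step V E 3 q ^^ k) S"
      have nu: "u \<notin> ?B" using Suc uv by blast
      have nv: "v \<notin> ?B" using Suc uv sg unfolding simple_graph_def by blast
      have uV: "u \<in> V" using uv sg unfolding simple_graph_def by blast
      have c3: "card (nbrs E u) = 3" using cub uV unfolding cubic_def by blast
      have fin: "finite (nbrs E u)" using c3 card.infinite by fastforce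
      have "\<not> 3 \<le> card (nbrs E u \<inter> ?B)"
      proof
        assume h: "3 \<le> card (nbrs E u \<inter> ?B)"
        have "card (nbrs E u \<inter> ?B) \<le> card (nbrs E u)" using fin by (simp add: card_mono)
        then have "card (nbrs E u \<inter> ?B) = card (nbrs E u)" using h c3 by simp
        then have "nbrs E u \<inter> ?B = nbrs E u" using fin by (simp add: card_subset_eq)
        moreover have "v \<in> nbrs E u" using uv by (simp add: nbrs_def)
        ultimately show False using nv by blast
      qed
      then show "u \<notin> (spread_step V E 3 q ^^ Suc k) S"
        using nu by (simp add: spread_step_def)
    qed
  qed
  from sp obtain k where k: "(spread_step V E 3 q ^^ k) S = V" "S \<subseteq> V"
    unfolding spreading_set_def by blast
  show ?thesis unfolding vertex_cover_def
  proof (intro conjI allI impI)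
    show "S \<subseteq> V" by fact
    fix u v assume "E u v"
    moreover have "u \<in> V" using \<open>E u v\<close> sg unfolding simple_graph_def by blast
    ultimately show "u \<in> S \<or> v \<in> S" using inv[of k] k by blast
  qed
qed

lemma cover_spread:
  assumes sg: "simple_graph V E" and cub: "cubic V E" and cf: "claw_free V E"
    and q: "q \<ge> 2" and vc: "vertex_cover V E C"
  shows "spreading_set V E 3 q C"
proof -
  have CV: "C \<subseteq> V" using vc unfolding vertex_cover_def by blast
  have "spread_step V E 3 q C = V"
  proof
    show "spread_step V E 3 q C \<subseteq> V" using CV unfolding spread_step_def by blast
    show "V \<subseteq> spread_step V E 3 q C"
    proof
      fix w assume wV: "w \<in> V"
      show "w \<in> spread_step V E 3 q C"
      proof (cases "w \<in> C")
        case True then show ?thesis unfolding spread_step_def by blast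
      next
        case False
        have sub: "nbrs E w \<subseteq> C" using vc False unfolding vertex_cover_def nbrs_def by blast
        have c3: "card (nbrs E w) = 3" using cub wV unfolding cubic_def by blast
        then obtain x y z where xyz: "nbrs E w = {x,y,z}" "x \<noteq> y" "y \<noteq> z" "x \<noteq> z"
          by (auto simp: card_3_iff)
        have e: "E w x" "E w y" "E w z" using xyz(1) unfolding nbrs_def by blast+
        have "E x y \<or> E x z \<or> E y z" using cf wV e xyz(2-4) unfolding claw_free_def by blast
        then obtain a b where ab: "a \<in> nbrs E w" "b \<in> nbrs E w" "E a b"
          using xyz(1) by blast
        have aV: "a \<in> V" using ab sg unfolding simple_graph_def nbrs_def by blast
        have ca: "card (nbrs E a) = 3" using cub aV unfolding cubic_def by blast
        have fa: "finite (nbrs E a)" using ca card.infinite by fastforce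
        have bin: "b \<in> nbrs E a \<inter> C" using ab sub by (auto simp: nbrs_def)
        have "card (nbrs E a - C) \<le> card (nbrs E a - {b})"
          using fa bin by (intro card_mono) auto
        also have "\<dots> = 2" using ca bin fa by simp
        finally have "enat (card (nbrs E a - C)) \<le> 2" by (simp add: numeral_eq_enat)
        then have "enat (card (nbrs E a - C)) \<le> q" using q order.trans by blast
        moreover have "a \<in> nbrs E w \<inter> C" using ab sub by blast
        moreover have "3 \<le> card (nbrs E w \<inter> C)" using sub c3 by (simp add: Int_absorb2)
        ultimately show ?thesis using wV False unfolding spread_step_def by blast
      qed
    qed
  qed
  then have "(spread_step V E 3 q ^^ 1) C = V" by simp
  then show ?thesis using CV unfolding spreading_set_def by blast
qed

theorem proposition3p8:
  fixes V :: "'a set" and E :: "'a \<Rightarrow> 'a \<Rightarrow> bool" and n :: nat and q :: enat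
  assumes "simple_graph V E"
    and "connected_graph V E"
    and "claw_free V E"
    and "cubic V E"
    and "card V = n"
    and "q \<ge> 2"
  shows "spreading_number V E 3 q = vertex_cover_number V E"
proof -
  have "\<And>S. spreading_set V E 3 q S \<longleftrightarrow> vertex_cover V E S"
    using spread_cover cover_spread assms by blast
  then show ?thesis unfolding spreading_number_def vertex_cover_number_def by simp
qed

end
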